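(* Let $\mathcal{D}$ be a distribution on $\mathbb{R}^d$, $f,h:\mathbb{R}^d\to\{0,1\}$ with $f$ a linear threshold function and $h$ a hypothesis, $q\ge2$, $k\in\{1,\dots,q-1\}$. Suppose $0<\mathrm{BagErr}_{\mathrm{oracle}}(h,f,\mathcal{D},q,k)\le\varepsilon'<1/(4q)$ and let $\varepsilon=4\varepsilon'$. Then (i) if $k\neq q/2$, $\Pr_{\mathbf{x}\sim\mathcal{D}}[f(\mathbf{x})\neq h(\mathbf{x})]\le\varepsilon$; and (ii) if $k=q/2$, $\Pr_{\mathbf{x}\sim\mathcal{D}}[f(\mathbf{x})\neq h(\mathbf{x})]\le\varepsilon$ or $\Pr_{\mathbf{x}\sim\mathcal{D}}[f(\mathbf{x})\neq1-h(\mathbf{x})]\le\varepsilon$.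
   Context: The bag oracle $\mathrm{Ex}(f,\mathcal{D},q,k)$ (defined for $1\le k\le q-1$, with both events $f=0,f=1$ of positive probability) returns a bag of $q$ independent points, $k$ drawn from $\mathcal{D}$ conditioned on $f=1$ and $q-k$ from $\mathcal{D}$ conditioned on $f=0$. $\mathrm{BagErr}_{\mathrm{oracle}}(h,f,\mathcal{D},q,k):=\Pr_{B\sim\mathrm{Ex}(f,\mathcal{D},q,k)}[\mathrm{Avg}\{h(\mathbf{x}):\mathbf{x}\in B\}\neq k/q]$. *)

theory Defs
  imports "HOL-Probability.Probability"
begin

definition ltf :: "(real ^ 'd \<Rightarrow> real) \<Rightarrow> bool" where
  "ltf f \<longleftrightarrow> (\<exists>(w :: real ^ 'd) (c :: real).
      \<forall>x. f x = (if w \<bullet> x + c > 0 then 1 else 0))"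

text \<open>The bag oracle Ex(f,D,q,k): a bag of q independent points, indexed by
  {..<q}; the first k drawn from D conditioned on f = 1, the remaining q-k from
  D conditioned on f = 0 (conditioning = uniform_measure, i.e. normalized restriction).\<close>
definition bag_oracle ::
  "'a measure \<Rightarrow> ('a \<Rightarrow> real) \<Rightarrow> nat \<Rightarrow> nat \<Rightarrow> (nat \<Rightarrow> 'a) measure" where
  "bag_oracle D f q k = PiM {..<q} (\<lambda>i.
      if i < k then uniform_measure D {x \<in> space D. f x = 1}
      else uniform_measure D {x \<in> space D. f x = 0})"

definition bag_err_oracle ::
  "('a \<Rightarrow> real) \<Rightarrow> ('a \<Rightarrow> real) \<Rightarrow> 'a measure \<Rightarrow> nat \<Rightarrow> nat \<Rightarrow> real" where
  "bag_err_oracle h f D q k =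
     measure (bag_oracle D f q k)
       {B \<in> space (bag_oracle D f q k).
          (\<Sum>i<q. h (B i)) / real q \<noteq> real k / real q}"

end

theory Submission
  imports Defs
begin

lemma indep_coords:
  assumes fin: "finite I" and ne: "I \<noteq> {}" and M: "\<And>i. i \<in> I \<Longrightarrow> prob_space (M i)"
  shows "prob_space.indep_vars (PiM I M) M (\<lambda>i x. x i) I"
proof -
  interpret P: prob_space "PiM I M" by (rule prob_space_PiM) (use M in auto)
  define M' where "M' = (\<lambda>i. if i \<in> I then M i else count_space UNIV)"
  have PM': "PiM I M' = PiM I M" by (rule PiM_cong) (auto simp: M'_def)
  have rv: "P.random_variable (M' i) (\<lambda>x. x i)" for i
  proof (cases "i \<in> I")
    case True then show ?thesis using measurable_component_singleton[OF True, of M] by (simp add: M'_def)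
  next
    case False
    have "(\<lambda>x. x i) \<in> measurable (PiM I M) (count_space UNIV)"
      by (rule measurable_cong[THEN iffD2, OF _ measurable_const[of undefined]])
        (use False in \<open>auto simp: space_PiM PiE_def extensional_def\<close>)
    then show ?thesis using False by (simp add: M'_def)
  qed
  have "P.indep_vars M' (\<lambda>i x. x i) I"
  proof (subst P.indep_vars_iff_distr_eq_PiM[OF ne rv])
    have "distr (PiM I M) (PiM I M') (\<lambda>x. \<lambda>i\<in>I. x i) = distr (PiM I M) (PiM I M) (\<lambda>x. x)"
      by (rule distr_cong) (auto simp: PM' space_PiM PiE_def extensional_def)
    also have "\<dots> = PiM I M" by (rule distr_id)
    also have "\<dots> = PiM I (\<lambda>i. distr (PiM I M) (M' i) (\<lambda>x. x i))"
      by (rule PiM_cong) (auto simp: M'_def distr_PiM_component M)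
    finally show "distr (PiM I M) (PiM I M') (\<lambda>x. \<lambda>i\<in>I. x i) = PiM I (\<lambda>i. distr (PiM I M) (M' i) (\<lambda>x. x i))" .
  qed
  then show ?thesis by (rule P.indep_vars_cong[THEN iffD1, rotated -1]) (auto simp: M'_def)
qed

lemma core1:
  fixes M :: "nat \<Rightarrow> 'a measure" and g :: "'a \<Rightarrow> real" and K :: real
  assumes M: "\<And>i. i < q \<Longrightarrow> prob_space (M i)"
    and g: "\<And>i. i < q \<Longrightarrow> g \<in> borel_measurable (M i)"
    and g01: "\<And>x. g x \<in> {0,1}"
    and i: "i < q"
  shows "min (measure (M i) {x\<in>space (M i). g x = 1}) (measure (M i) {x\<in>space (M i). g x = 0})
         \<le> measure (PiM {..<q} M) {B\<in>space (PiM {..<q} M). (\<Sum>j<q. g (B j)) \<noteq> K}"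
proof -
  let ?P = "PiM {..<q} M"
  interpret P: prob_space ?P by (rule prob_space_PiM) (use M in auto)
  have ne: "{..<q} \<noteq> {}" using i by auto
  have ind0: "P.indep_vars M (\<lambda>j x. x j) {..<q}" by (rule indep_coords) (use ne M in auto)
  have ind: "P.indep_vars (\<lambda>_. borel) (\<lambda>j x. g (x j)) {..<q}"
    by (rule P.indep_vars_compose2[OF ind0]) (use g in auto)
  define I' where "I' = {..<q} - {i}"
  have ins: "insert i I' = {..<q}" "i \<notin> I'" "finite I'" using i by (auto simp: I'_def)
  define R where "R = (\<lambda>x. \<Sum>j\<in>I'. g (x j))"
  have iv: "P.indep_var borel (\<lambda>x. g (x i)) borel R"
    unfolding R_def by (rule P.indep_vars_sum) (use ins ind in auto)
  have gc: "(\<lambda>x. g (x j)) \<in> borel_measurable ?P" if "j < q" for j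
    using measurable_compose[OF measurable_component_singleton[of j "{..<q}" M] g[OF that]] that by auto
  have Xm: "(\<lambda>x. g (x i)) \<in> borel_measurable ?P"
    using measurable_compose[OF measurable_component_singleton[of i "{..<q}" M] g[OF i]] i by auto
  have Rm: "R \<in> borel_measurable ?P" unfolding R_def
    by (intro borel_measurable_sum gc) (auto simp: I'_def)
  have S: "(\<Sum>j<q. g (x j)) = g (x i) + R x" for x
    unfolding R_def using ins by (metis sum.insert)
  have marg: "P.prob {x\<in>space ?P. g (x i) = v} = measure (M i) {x\<in>space (M i). g x = v}" for v
  proof -
    have "measure (M i) {x\<in>space (M i). g x = v} = measure (distr ?P (M i) (\<lambda>\<omega>. \<omega> i)) {x\<in>space (M i). g x = v}"
      using distr_PiM_component[of "{..<q}" M i] M i by simp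
    also have "\<dots> = P.prob ((\<lambda>\<omega>. \<omega> i) -` {x\<in>space (M i). g x = v} \<inter> space ?P)"
      by (rule measure_distr) (use i g in \<open>auto intro: measurable_component_singleton\<close>)
    also have "(\<lambda>\<omega>. \<omega> i) -` {x\<in>space (M i). g x = v} \<inter> space ?P = {x\<in>space ?P. g (x i) = v}"
      using i by (auto simp: space_PiM)
    finally show ?thesis by simp
  qed
  define c where "c = measure (M i) {x\<in>space (M i). g x = 1}"
  define d where "d = measure (M i) {x\<in>space (M i). g x = 0}"
  define r1 where "r1 = P.prob {x\<in>space ?P. R x = K - 1}"
  define r0 where "r0 = P.prob {x\<in>space ?P. R x = K}"
  have jnt: "P.prob {x\<in>space ?P. g (x i) = v \<and> R x = w} = P.prob {x\<in>space ?P. g (x i) = v} * P.prob {x\<in>space ?P. R x = w}" for v w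
  proof -
    have "P.prob ((\<lambda>x. (g (x i), R x)) -` ({v} \<times> {w}) \<inter> space ?P) = P.prob ((\<lambda>x. g (x i)) -` {v} \<inter> space ?P) * P.prob (R -` {w} \<inter> space ?P)"
      by (rule P.indep_varD[OF iv]) auto
    moreover have "(\<lambda>x. (g (x i), R x)) -` ({v} \<times> {w}) \<inter> space ?P = {x\<in>space ?P. g (x i) = v \<and> R x = w}" by auto
    moreover have "(\<lambda>x. g (x i)) -` {v} \<inter> space ?P = {x\<in>space ?P. g (x i) = v}" by auto
    moreover have "R -` {w} \<inter> space ?P = {x\<in>space ?P. R x = w}" by auto
    ultimately show ?thesis by simp
  qed
  have cd1: "c + d = 1"
  proof -
    have "P.prob {x\<in>space ?P. g (x i) = 1} + P.prob {x\<in>space ?P. g (x i) = 0} = P.prob ({x\<in>space ?P. g (x i) = 1} \<union> {x\<in>space ?P. g (x i) = 0})"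
      by (rule P.finite_measure_Union[symmetric]) (use Xm in auto)
    also have "{x\<in>space ?P. g (x i) = 1} \<union> {x\<in>space ?P. g (x i) = 0} = space ?P" using g01 by blast
    finally show ?thesis using marg c_def d_def P.prob_space by simp
  qed
  have r10: "r1 + r0 \<le> 1"
  proof -
    have "r1 + r0 = P.prob ({x\<in>space ?P. R x = K - 1} \<union> {x\<in>space ?P. R x = K})"
      unfolding r1_def r0_def by (rule P.finite_measure_Union[symmetric]) (use Rm in auto)
    then show ?thesis by simp
  qed
  have eqK: "{x\<in>space ?P. (\<Sum>j<q. g (x j)) = K} = {x\<in>space ?P. g (x i) = 1 \<and> R x = K - 1} \<union> {x\<in>space ?P. g (x i) = 0 \<and> R x = K}"
    using g01 by (auto simp: S) (metis insert_iff singletonD)+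
  have "P.prob {x\<in>space ?P. (\<Sum>j<q. g (x j)) = K} = c * r1 + d * r0"
    unfolding eqK
    by (subst P.finite_measure_Union) (use Xm Rm in \<open>auto simp: jnt marg c_def d_def r1_def r0_def\<close>)
  also have "\<dots> \<le> max c d * (r1 + r0)"
    using measure_nonneg r1_def r0_def by (auto simp: max_def distrib_left intro: add_mono mult_right_mono)
  also have "\<dots> \<le> max c d"
    using r10 cd1 measure_nonneg c_def d_def by (auto intro!: mult_left_le simp: max_def)
  finally have le: "P.prob {x\<in>space ?P. (\<Sum>j<q. g (x j)) = K} \<le> max c d" .
  have Sm: "(\<lambda>x. \<Sum>j<q. g (x j)) \<in> borel_measurable ?P"
    by (intro borel_measurable_sum gc) auto
  have "P.prob {x\<in>space ?P. (\<Sum>j<q. g (x j)) \<noteq> K} = 1 - P.prob {x\<in>space ?P. (\<Sum>j<q. g (x j)) = K}"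
    using P.prob_compl[of "{x\<in>space ?P. (\<Sum>j<q. g (x j)) = K}"] Sm
    by (auto simp: set_diff_eq) (smt (verit) Collect_cong)
  then show ?thesis using le cd1 unfolding c_def[symmetric] d_def[symmetric] by (auto simp: max_def min_def)
qed

lemma marg_PiM:
  fixes M :: "nat \<Rightarrow> 'a measure"
  assumes M: "\<And>i. i < q \<Longrightarrow> prob_space (M i)" and i: "i < q"
    and A: "{x\<in>space (M i). Q x} \<in> sets (M i)"
  shows "measure (PiM {..<q} M) {x\<in>space (PiM {..<q} M). Q (x i)} = measure (M i) {x\<in>space (M i). Q x}"
proof -
  let ?P = "PiM {..<q} M"
  have "measure (M i) {x\<in>space (M i). Q x} = measure (distr ?P (M i) (\<lambda>\<omega>. \<omega> i)) {x\<in>space (M i). Q x}"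
    using distr_PiM_component[of "{..<q}" M i] M i by simp
  also have "\<dots> = measure ?P ((\<lambda>\<omega>. \<omega> i) -` {x\<in>space (M i). Q x} \<inter> space ?P)"
    by (rule measure_distr) (use i A in \<open>auto intro: measurable_component_singleton\<close>)
  also have "(\<lambda>\<omega>. \<omega> i) -` {x\<in>space (M i). Q x} \<inter> space ?P = {x\<in>space ?P. Q (x i)}"
    using i by (auto simp: space_PiM)
  finally show ?thesis by simp
qed

lemma core2:
  fixes M :: "nat \<Rightarrow> 'a measure" and g :: "'a \<Rightarrow> real" and K :: real and v :: "nat \<Rightarrow> real"
  assumes M: "\<And>i. i < q \<Longrightarrow> prob_space (M i)"
    and g: "\<And>i. i < q \<Longrightarrow> g \<in> borel_measurable (M i)"
    and bad: "\<And>i. i < q \<Longrightarrow> measure (M i) {x\<in>space (M i). g x \<noteq> v i} \<le> e"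
    and err: "measure (PiM {..<q} M) {B\<in>space (PiM {..<q} M). (\<Sum>j<q. g (B j)) \<noteq> K} \<le> e"
    and small: "real q * e + e < 1"
  shows "(\<Sum>j<q. v j) = K"
proof (rule ccontr)
  assume ne: "(\<Sum>j<q. v j) \<noteq> K"
  let ?P = "PiM {..<q} M"
  interpret P: prob_space ?P by (rule prob_space_PiM) (use M in auto)
  have gc: "(\<lambda>x. g (x j)) \<in> borel_measurable ?P" if "j < q" for j
    using measurable_compose[OF measurable_component_singleton[of j "{..<q}" M] g[OF that]] that by auto
  define E where "E = {B\<in>space ?P. \<forall>j<q. g (B j) = v j}"
  have Em: "E \<in> P.events" unfolding E_def using gc by measurable
  have "E \<subseteq> {B\<in>space ?P. (\<Sum>j<q. g (B j)) \<noteq> K}" using ne by (auto simp: E_def)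
  hence "P.prob E \<le> P.prob {B\<in>space ?P. (\<Sum>j<q. g (B j)) \<noteq> K}"
    by (intro P.finite_measure_mono) (use gc in \<open>auto intro!: borel_measurable_sum\<close>)
  hence E1: "P.prob E \<le> e" using err by simp
  have sub: "space ?P - E = (\<Union>j\<in>{..<q}. {B\<in>space ?P. g (B j) \<noteq> v j})" by (auto simp: E_def)
  have "P.prob (space ?P - E) \<le> (\<Sum>j\<in>{..<q}. P.prob {B\<in>space ?P. g (B j) \<noteq> v j})"
    unfolding sub by (rule P.finite_measure_subadditive_finite) (use gc in auto)
  also have "\<dots> \<le> (\<Sum>j\<in>{..<q}. e)"
  proof (rule sum_mono)
    fix j assume j: "j \<in> {..<q}"
    have "P.prob {B\<in>space ?P. g (B j) \<noteq> v j} = measure (M j) {x\<in>space (M j). g x \<noteq> v j}"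
      by (rule marg_PiM) (use M j g in auto)
    then show "P.prob {B\<in>space ?P. g (B j) \<noteq> v j} \<le> e" using bad j by simp
  qed
  finally have "P.prob (space ?P - E) \<le> real q * e" by simp
  moreover have "P.prob (space ?P - E) = 1 - P.prob E" using P.prob_compl[OF Em] .
  ultimately show False using E1 small by linarith
qed

theorem theorem9:
  fixes D :: "(real ^ 'd) measure"
    and f h :: "real ^ 'd \<Rightarrow> real"
    and q k :: nat
    and eps' :: real
  assumes D: "prob_space D" "sets D = sets borel"
    and f_ltf: "ltf f"
    and h_01: "\<forall>x. h x \<in> {0, 1}"
    and h_meas: "h \<in> borel_measurable borel"
    and q: "q \<ge> 2"
    and k: "1 \<le> k" "k \<le> q - 1"
    and pos1: "measure D {x \<in> space D. f x = 1} > 0"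
    and pos0: "measure D {x \<in> space D. f x = 0} > 0"
    and err_pos: "0 < bag_err_oracle h f D q k"
    and err_le: "bag_err_oracle h f D q k \<le> eps'"
    and eps'_lt: "eps' < 1 / (4 * real q)"
  shows "(real k \<noteq> real q / 2 \<longrightarrow>
            measure D {x \<in> space D. f x \<noteq> h x} \<le> 4 * eps') \<and>
         (real k = real q / 2 \<longrightarrow>
            measure D {x \<in> space D. f x \<noteq> h x} \<le> 4 * eps' \<or>
            measure D {x \<in> space D. f x \<noteq> 1 - h x} \<le> 4 * eps')"
proof -
  interpret DP: prob_space D by (rule D(1))
  obtain w c where fw: "\<And>x. f x = (if w \<bullet> x + c > 0 then 1 else 0)" using f_ltf unfolding ltf_def by blast
  have f01: "f x \<in> {0,1}" for x using fw[of x] by auto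
  have fb: "f \<in> borel_measurable borel" unfolding fw[abs_def] by measurable
  have fD: "f \<in> borel_measurable D" using fb by (subst measurable_cong_sets[OF D(2) refl])
  have hD: "h \<in> borel_measurable D" using h_meas by (subst measurable_cong_sets[OF D(2) refl])
  define S1 where "S1 = {x\<in>space D. f x = 1}"
  define S0 where "S0 = {x\<in>space D. f x = 0}"
  have S1m: "S1 \<in> sets D" unfolding S1_def using fD by measurable
  have S0m: "S0 \<in> sets D" unfolding S0_def using fD by measurable
  have e1: "emeasure D S1 \<noteq> 0" "emeasure D S1 \<noteq> \<infinity>"
    using pos1 S1_def DP.emeasure_eq_measure by auto
  have e0: "emeasure D S0 \<noteq> 0" "emeasure D S0 \<noteq> \<infinity>"
    using pos0 S0_def DP.emeasure_eq_measure by auto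
  define M1 where "M1 = uniform_measure D S1"
  define M0 where "M0 = uniform_measure D S0"
  have pM1: "prob_space M1" unfolding M1_def by (rule prob_space_uniform_measure[OF e1])
  have pM0: "prob_space M0" unfolding M0_def by (rule prob_space_uniform_measure[OF e0])
  have sM1: "sets M1 = sets D" "space M1 = space D" unfolding M1_def by auto
  have sM0: "sets M0 = sets D" "space M0 = space D" unfolding M0_def by auto
  define Mi where "Mi = (\<lambda>i::nat. if i < k then M1 else M0)"
  have Mi: "\<And>i. i < q \<Longrightarrow> prob_space (Mi i)" using pM1 pM0 by (auto simp: Mi_def)
  have hMi: "\<And>i. i < q \<Longrightarrow> h \<in> borel_measurable (Mi i)"
    using hD measurable_cong_sets[OF sM1(1) refl] measurable_cong_sets[OF sM0(1) refl] by (auto simp: Mi_def)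
  have h01': "\<And>x. h x \<in> {0,1}" using h_01 by auto
  have bag: "bag_oracle D f q k = PiM {..<q} Mi"
    unfolding bag_oracle_def Mi_def M1_def M0_def S1_def S0_def ..
  let ?P = "PiM {..<q} Mi"
  have qpos: "real q > 0" using q by simp
  define err where "err = measure ?P {B\<in>space ?P. (\<Sum>j<q. h (B j)) \<noteq> real k}"
  have err_eq: "bag_err_oracle h f D q k = err"
  proof -
    have "{B\<in>space ?P. (\<Sum>j<q. h (B j)) / real q \<noteq> real k / real q} = {B\<in>space ?P. (\<Sum>j<q. h (B j)) \<noteq> real k}"
      using qpos by (auto simp: divide_cancel_right)
    then show ?thesis unfolding bag_err_oracle_def bag err_def by simp
  qed
  have epos: "eps' > 0" using err_pos err_le by simp
  have errle: "err \<le> eps'" using err_le err_eq by simp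
  have qe: "real q * eps' < 1/4" using eps'_lt qpos by (simp add: field_simps)
  have e8: "eps' < 1/8"
  proof -
    have "1 / (4 * real q) \<le> 1/8" using q by (simp add: field_simps)
    then show ?thesis using eps'_lt by simp
  qed
  define c1 where "c1 = measure M1 {x\<in>space M1. h x = 1}"
  define d1 where "d1 = measure M1 {x\<in>space M1. h x = 0}"
  define c0 where "c0 = measure M0 {x\<in>space M0. h x = 1}"
  define d0 where "d0 = measure M0 {x\<in>space M0. h x = 0}"
  have m1: "min c1 d1 \<le> err"
    using core1[of q Mi h 0 "real k", OF Mi hMi h01'] k q unfolding err_def c1_def d1_def
    by (auto simp: Mi_def)
  have m0: "min c0 d0 \<le> err"
    using core1[of q Mi h "q - 1" "real k", OF Mi hMi h01'] k q unfolding err_def c0_def d0_def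
    by (auto simp: Mi_def)
  define v1 :: real where "v1 = (if d1 \<le> c1 then 1 else 0)"
  define v0 :: real where "v0 = (if d0 \<le> c0 then 1 else 0)"
  have b1: "measure M1 {x\<in>space M1. h x \<noteq> v1} \<le> eps'"
  proof -
    have "{x\<in>space M1. h x \<noteq> v1} = (if d1 \<le> c1 then {x\<in>space M1. h x = 0} else {x\<in>space M1. h x = 1})"
      using h01' by (auto simp: v1_def)
    then have "measure M1 {x\<in>space M1. h x \<noteq> v1} = min c1 d1" by (auto simp: c1_def d1_def min_def)
    then show ?thesis using m1 errle by simp
  qed
  have b0: "measure M0 {x\<in>space M0. h x \<noteq> v0} \<le> eps'"
  proof -
    have "{x\<in>space M0. h x \<noteq> v0} = (if d0 \<le> c0 then {x\<in>space M0. h x = 0} else {x\<in>space M0. h x = 1})"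
      using h01' by (auto simp: v0_def)
    then have "measure M0 {x\<in>space M0. h x \<noteq> v0} = min c0 d0" by (auto simp: c0_def d0_def min_def)
    then show ?thesis using m0 errle by simp
  qed
  define v where "v = (\<lambda>i::nat. if i < k then v1 else v0)"
  have "(\<Sum>j<q. v j) = real k"
    by (rule core2[OF Mi hMi, where v=v and e=eps']) (use b1 b0 errle qe e8 in \<open>auto simp: v_def Mi_def err_def\<close>)
  moreover have "(\<Sum>j<q. v j) = real k * v1 + real (q - k) * v0"
  proof -
    have "(\<Sum>j<q. v j) = (\<Sum>j\<in>{0..<k}. v j) + (\<Sum>j\<in>{k..<q}. v j)"
      using k q by (simp add: lessThan_atLeast0 sum.atLeastLessThan_concat)
    also have "\<dots> = (\<Sum>j\<in>{0..<k}. v1) + (\<Sum>j\<in>{k..<q}. v0)"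
      by (intro arg_cong2[where f="(+)"] sum.cong) (auto simp: v_def)
    finally show ?thesis by simp
  qed
  ultimately have vk: "real k * v1 + real (q - k) * v0 = real k" by simp
  have gen: "measure D {x\<in>space D. (f x = 1 \<and> h x \<noteq> v1) \<or> (f x = 0 \<and> h x \<noteq> v0)} \<le> eps'"
  proof -
    define A1 where "A1 = {x\<in>space D. h x \<noteq> v1}"
    define A0 where "A0 = {x\<in>space D. h x \<noteq> v0}"
    have A1m: "A1 \<in> sets D" unfolding A1_def using hD by measurable
    have A0m: "A0 \<in> sets D" unfolding A0_def using hD by measurable
    have u1: "measure M1 A1 = measure D (S1 \<inter> A1) / measure D S1"
      unfolding M1_def by (rule measure_uniform_measure[OF e1 A1m])
    have u0: "measure M0 A0 = measure D (S0 \<inter> A0) / measure D S0"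
      unfolding M0_def by (rule measure_uniform_measure[OF e0 A0m])
    have "measure M1 A1 \<le> eps'" using b1 sM1 A1_def by simp
    hence i1: "measure D (S1 \<inter> A1) \<le> measure D S1 * eps'" using u1 pos1 S1_def by (simp add: field_simps)
    have "measure M0 A0 \<le> eps'" using b0 sM0 A0_def by simp
    hence i0: "measure D (S0 \<inter> A0) \<le> measure D S0 * eps'" using u0 pos0 S0_def by (simp add: field_simps)
    have "measure D S1 + measure D S0 = measure D (S1 \<union> S0)"
      using S1m S0m by (intro DP.finite_measure_Union[symmetric]) (auto simp: S1_def S0_def)
    also have "\<dots> \<le> 1" by simp
    finally have ss: "measure D S1 + measure D S0 \<le> 1" .
    have "{x\<in>space D. (f x = 1 \<and> h x \<noteq> v1) \<or> (f x = 0 \<and> h x \<noteq> v0)} = (S1 \<inter> A1) \<union> (S0 \<inter> A0)"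
      by (auto simp: S1_def S0_def A1_def A0_def)
    hence "measure D {x\<in>space D. (f x = 1 \<and> h x \<noteq> v1) \<or> (f x = 0 \<and> h x \<noteq> v0)} \<le> measure D (S1 \<inter> A1) + measure D (S0 \<inter> A0)"
      using measure_Un_le[of "S1 \<inter> A1" D "S0 \<inter> A0"] S1m S0m A1m A0m by auto
    also have "\<dots> \<le> (measure D S1 + measure D S0) * eps'" using i1 i0 by (simp add: distrib_right)
    also have "\<dots> \<le> eps'" using ss epos by (simp add: mult_left_le_one_le)
    finally show ?thesis .
  qed
  have v1c: "v1 = 0 \<or> v1 = 1" and v0c: "v0 = 0 \<or> v0 = 1" by (auto simp: v1_def v0_def)
  have kq: "k < q" "0 < k" using k q by auto
  show ?thesis
  proof (cases "v1 = 1")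
    case True
    have "v0 = 0"
    proof (rule ccontr)
      assume "v0 \<noteq> 0" hence "v0 = 1" using v0c by simp
      with True vk kq show False by (simp add: of_nat_diff)
    qed
    have "{x\<in>space D. f x \<noteq> h x} = {x\<in>space D. (f x = 1 \<and> h x \<noteq> v1) \<or> (f x = 0 \<and> h x \<noteq> v0)}"
      using True \<open>v0 = 0\<close> f01 h01' by auto (metis insert_iff singletonD)+
    then have "measure D {x\<in>space D. f x \<noteq> h x} \<le> 4 * eps'" using gen epos by simp
    then show ?thesis by simp
  next
    case False
    hence "v1 = 0" using v1c by simp
    have "v0 = 1" using vk kq \<open>v1 = 0\<close> v0c by auto
    with vk \<open>v1 = 0\<close> have "real (q - k) = real k" by simp
    hence kk: "real k = real q / 2" using kq by (simp add: of_nat_diff)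
    have "{x\<in>space D. f x \<noteq> 1 - h x} = {x\<in>space D. (f x = 1 \<and> h x \<noteq> v1) \<or> (f x = 0 \<and> h x \<noteq> v0)}"
      using \<open>v1 = 0\<close> \<open>v0 = 1\<close> f01 h01' by auto (metis insert_iff singletonD diff_zero diff_self)+
    then have "measure D {x\<in>space D. f x \<noteq> 1 - h x} \<le> 4 * eps'" using gen epos by simp
    then show ?thesis using kk by simp
  qed
qed

end
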